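(* Let $\varphi(z)=Az+b$ be such that $C_\varphi$ is bounded on $\mathcal F(\mathbb C^d)$. Then $b\in\mathrm{Ran}(I-A)$; in particular $\varphi$ has a fixed point in $\mathbb C^d$.
   Context: $\mathcal F(\mathbb C^d)$ is the Fock space of entire functions $f$ on $\mathbb C^d$ with $\|f\|^2=(2\pi)^{-d}\int_{\mathbb C^d}|f(z)|^2e^{-|z|^2/2}\,dA(z)<\infty$ ($dA$ Lebesgue measure). $C_\varphi f=f\circ\varphi$. It is known that $C_\varphi$ is bounded iff $\varphi(z)=Az+b$ with $\|A\|\le1$ and $\langle Av,b\rangle=0$ whenever $|Av|=|v|$, where $\langle z,w\rangle=\sum_j z_j\overline{w_j}$. *)

theory Defs
  imports "HOL-Analysis.Analysis"
begin

text \<open>Points of C^d are vectors complex ^ 'd (d = CARD('d)); the norm is the Euclidean one,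
  so norm z ^ 2 = sum of |z_j|^2.  Lebesgue measure dA on C^d = R^(2d) is lborel.\<close>

definition entire_fun :: "(complex ^ 'd \<Rightarrow> complex) \<Rightarrow> bool" where
  "entire_fun f \<longleftrightarrow>
     (\<forall>z. \<exists>D :: complex ^ 'd. (f has_derivative (\<lambda>h. \<Sum>i\<in>UNIV. D $ i * h $ i)) (at z))"

definition fock_norm2 :: "(complex ^ 'd \<Rightarrow> complex) \<Rightarrow> ennreal" where
  "fock_norm2 f = ennreal ((2 * pi) powi (- int CARD('d))) *
     (\<integral>\<^sup>+ z. ennreal ((cmod (f z))\<^sup>2 * exp (- (norm z)\<^sup>2 / 2)) \<partial>lborel)"

definition fock_space :: "(complex ^ 'd \<Rightarrow> complex) set" where
  "fock_space = {f. entire_fun f \<and> fock_norm2 f < \<infinity>}"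

definition bounded_comp_op :: "(complex ^ 'd \<Rightarrow> complex ^ 'd) \<Rightarrow> bool" where
  "bounded_comp_op \<phi> \<longleftrightarrow>
     (\<forall>f\<in>fock_space. f \<circ> \<phi> \<in> fock_space) \<and>
     (\<exists>C::real. C \<ge> 0 \<and> (\<forall>f\<in>fock_space. fock_norm2 (f \<circ> \<phi>) \<le> ennreal C * fock_norm2 f))"

end

theory Submission
  imports Defs "HOL-Probability.Distributions"
begin

definition LL :: "complex^'d \<Rightarrow> complex^'d \<Rightarrow> complex" where
 "LL c z = (\<Sum>j\<in>UNIV. z$j * c$j)"

lemma lin:
  fixes A :: "complex ^ 'd ^ 'd" and b :: "complex ^ 'd"
  assumes "b \<notin> range (\<lambda>x. x - A *v x)"
  shows "\<exists>c. (\<forall>x. LL c (x - A *v x) = 0) \<and> LL c b \<noteq> 0"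
proof -
  let ?M = "\<lambda>x. x - A *v x"
  have linM: "linear ?M"
  proof (intro linear_compose_sub)
    show "linear (\<lambda>x. x)" by (rule linearI) auto
    show "linear ((*v) A)"
      by (rule linearI) (simp_all add: matrix_vector_mult_def vec_eq_iff sum.distrib distrib_left distrib_right scaleR_sum_right)
  qed
  have sp: "span (range ?M) = range ?M"
    using linM by (simp add: span_eq_iff linear_subspace_image subspace_UNIV)
  obtain y z where y: "y \<in> span (range ?M)" and z: "\<And>w. w \<in> span (range ?M) \<Longrightarrow> orthogonal z w"
    and bz: "b = y + z" using orthogonal_subspace_decomp_exists by blast
  define c where "c = (\<chi> j. cnj (z$j))"
  have Re: "Re (LL c x) = x \<bullet> z" for x
    by (simp add: LL_def c_def inner_vec_def inner_complex_def Re_sum)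
  have orth: "w \<bullet> z = 0" if "w \<in> range ?M" for w
    using z[of w] that span_base[of w "range ?M"] by (simp add: orthogonal_def inner_commute)
  have Mi: "?M (\<chi> j. \<i> * x$j) = (\<chi> j. \<i> * (?M x)$j)" for x
    by (simp add: vec_eq_iff matrix_vector_mult_def sum_distrib_left algebra_simps)
  have LLi: "LL c (\<chi> j. \<i> * w$j) = \<i> * LL c w" for w
    by (simp add: LL_def sum_distrib_left algebra_simps)
  have "LL c (?M x) = 0" for x
  proof -
    have "Re (LL c (?M x)) = 0" using Re orth by auto
    moreover have "Re (LL c (?M (\<chi> j. \<i> * x$j))) = 0" using Re orth by auto
    then have "Re (LL c (\<chi> j. \<i> * (?M x)$j)) = 0" by (simp only: Mi)
    then have "Im (LL c (?M x)) = 0" by (simp only: LLi) simp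
    ultimately show ?thesis by (simp add: complex_eq_iff)
  qed
  moreover have "LL c b \<noteq> 0"
  proof
    assume "LL c b = 0"
    then have "b \<bullet> z = 0" using Re[of b] by simp
    moreover have "y \<bullet> z = 0" using z[OF y] by (simp add: orthogonal_def inner_commute)
    ultimately have "z = 0" by (simp add: bz inner_add_left)
    then show False using assms y sp bz by auto
  qed
  ultimately show ?thesis by blast
qed

lemma LL_deriv: "(LL c has_derivative LL c) (at z)"
proof -
  have "bounded_linear (LL c)"
    unfolding LL_def
    by (intro bounded_linear_sum bounded_linear_mult_left[THEN bounded_linear_compose] bounded_linear_vec_nth)
  then show ?thesis by (rule bounded_linear_imp_has_derivative)
qed
lemma exp_deriv: "((\<lambda>z. exp (s * LL c z)) has_derivative (\<lambda>h. \<Sum>i\<in>UNIV. (\<chi> i. exp (s * LL c z) * s * c$i) $ i * h $ i)) (at z)"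
proof -
  have "((\<lambda>z. exp (s * LL c z)) has_derivative (\<lambda>h. exp (s * LL c z) * (s * LL c h))) (at z)"
    using has_derivative_compose[OF has_derivative_mult_right[OF LL_deriv, of s] DERIV_exp[THEN has_field_derivative_imp_has_derivative]]
    by (simp add: o_def mult.commute mult.left_commute)
  moreover have "(\<lambda>h. exp (s * LL c z) * (s * LL c h)) = (\<lambda>h. \<Sum>i\<in>UNIV. (\<chi> i. exp (s * LL c z) * s * c$i) $ i * h $ i)"
    by (rule ext) (simp add: LL_def sum_distrib_left sum_distrib_right, rule sum.cong, auto simp: ac_simps)
  ultimately show ?thesis by simp
qed
lemma cont: "continuous_on UNIV (\<lambda>z::complex^'d. exp (s * LL c z))"
  unfolding LL_def by (intro continuous_intros)
lemma gauss1: "(\<integral>\<^sup>+ x. ennreal (exp (- x\<^sup>2 / 4)) \<partial>lborel) < \<infinity>"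
proof -
  have eq: "exp (- x\<^sup>2 / 4) = sqrt (4 * pi) * normal_density 0 (sqrt 2) x" for x :: real
    by (simp add: normal_density_def real_sqrt_mult)
  have "integrable lborel (\<lambda>x. sqrt (4 * pi) * normal_density 0 (sqrt 2) x)"
    by (intro integrable_mult_right integrable_normal_density) (simp add: real_sqrt_gt_zero)
  then have "integrable lborel (\<lambda>x::real. exp (- x\<^sup>2 / 4))" by (simp only: eq)
  then show ?thesis using integrableD(2) by (simp add: top.not_eq_extremum)
qed

lemma gaussN: "(\<integral>\<^sup>+ z. ennreal (exp (- (norm (z::'a::euclidean_space))\<^sup>2 / 4)) \<partial>lborel) < \<infinity>"
proof -
  have "ennreal (exp (- (norm z)\<^sup>2 / 4)) = (\<Prod>b\<in>Basis. ennreal (exp (- (z \<bullet> b)\<^sup>2 / 4)))" for z :: 'a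
  proof -
    have "(norm z)\<^sup>2 = (\<Sum>b\<in>Basis. (z \<bullet> b)\<^sup>2)"
      by (subst power2_norm_eq_inner, subst euclidean_inner, simp add: power2_eq_square)
    then have "exp (- (norm z)\<^sup>2 / 4) = (\<Prod>b\<in>Basis. exp (- (z \<bullet> b)\<^sup>2 / 4))"
      by (simp add: exp_sum[symmetric] sum_negf sum_divide_distrib)
    then show ?thesis by (simp add: prod_ennreal)
  qed
  then have "(\<integral>\<^sup>+ z. ennreal (exp (- (norm (z::'a))\<^sup>2 / 4)) \<partial>lborel)
     = (\<integral>\<^sup>+ z. (\<Prod>b\<in>Basis. (\<lambda>b x. ennreal (exp (- x\<^sup>2 / 4))) b ((z::'a) \<bullet> b)) \<partial>lborel)"
    by (intro nn_integral_cong) (simp only:)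
  also have "\<dots> = (\<Prod>b\<in>(Basis::'a set). (\<integral>\<^sup>+ x. ennreal (exp (- x\<^sup>2 / 4)) \<partial>lborel))"
    by (rule nn_integral_lborel_prod) auto
  also have "\<dots> < \<infinity>" using gauss1 by (simp add: power_less_top_ennreal)
  finally show ?thesis .
qed
lemma norm_sq_vec: "(norm (z::complex^'d))\<^sup>2 = (\<Sum>j\<in>UNIV. (cmod (z$j))\<^sup>2)"
  by (simp add: norm_vec_def L2_set_def sum_nonneg)

lemma ab: fixes x y :: real shows "x*y \<le> x^2/8 + 2*y^2"
proof -
  have "0 \<le> (x - 4*y)^2" by simp
  then show ?thesis by (simp add: power2_eq_square algebra_simps)
qed

lemma coord_bound: "Re (a * b) \<le> (cmod a)\<^sup>2 / 8 + 2 * (cmod b)\<^sup>2"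
proof -
  have "Re (a * b) \<le> cmod (a * b)" by (rule complex_Re_le_cmod)
  also have "\<dots> = cmod a * cmod b" by (simp add: norm_mult)
  also have "\<dots> \<le> (cmod a)\<^sup>2 / 8 + 2 * (cmod b)\<^sup>2" by (rule ab)
  finally show ?thesis .
qed

lemma pt_bound:
  fixes z c :: "complex^'d"
  shows "(cmod (exp (s * LL c z)))\<^sup>2 * exp (- (norm z)\<^sup>2 / 2)
     \<le> exp (4 * (\<Sum>j\<in>UNIV. (cmod (s * c$j))\<^sup>2)) * exp (- (norm z)\<^sup>2 / 4)"
proof -
  let ?W = "\<Sum>j\<in>UNIV. (cmod (s * c$j))\<^sup>2"
  have "Re (s * LL c z) = (\<Sum>j\<in>UNIV. Re (z$j * (s * c$j)))"
    by (simp add: LL_def sum_distrib_left Re_sum ac_simps)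
  also have "\<dots> \<le> (\<Sum>j\<in>UNIV. (cmod (z$j))\<^sup>2 / 8 + 2 * (cmod (s * c$j))\<^sup>2)"
    by (intro sum_mono coord_bound)
  also have "\<dots> = (norm z)\<^sup>2 / 8 + 2 * ?W"
    by (simp add: norm_sq_vec sum.distrib sum_divide_distrib sum_distrib_left)
  finally have R: "Re (s * LL c z) \<le> (norm z)\<^sup>2 / 8 + 2 * ?W" .
  have e1: "(cmod (exp (s * LL c z)))\<^sup>2 = exp (2 * Re (s * LL c z))"
    by (simp add: norm_exp_eq_Re power2_eq_square exp_add[symmetric])
  have "(cmod (exp (s * LL c z)))\<^sup>2 * exp (- (norm z)\<^sup>2 / 2) = exp (2 * Re (s * LL c z) + - (norm z)\<^sup>2 / 2)"
    by (simp only: e1 exp_add)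
  also have "\<dots> \<le> exp (4 * ?W + - (norm z)\<^sup>2 / 4)"
    unfolding exp_le_cancel_iff using R by linarith
  also have "\<dots> = exp (4 * ?W) * exp (- (norm z)\<^sup>2 / 4)"
    by (simp only: exp_add)
  finally show ?thesis .
qed

lemma meas_cont:
  fixes g :: "complex^'d \<Rightarrow> complex"
  assumes "continuous_on UNIV g"
  shows "(\<lambda>z. ennreal ((cmod (g z))\<^sup>2 * exp (- (norm z)\<^sup>2 / 2))) \<in> borel_measurable lborel"
proof -
  have "continuous_on UNIV (\<lambda>z. (cmod (g z))\<^sup>2 * exp (- (norm z)\<^sup>2 / 2))"
    by (intro continuous_intros assms; simp)
  then have "(\<lambda>z. (cmod (g z))\<^sup>2 * exp (- (norm z)\<^sup>2 / 2)) \<in> borel_measurable borel"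
    by (rule borel_measurable_continuous_onI)
  then show ?thesis unfolding measurable_lborel1 by measurable
qed

lemma fock_scale:
  fixes g :: "complex^'d \<Rightarrow> complex"
  assumes "continuous_on UNIV g"
  shows "fock_norm2 (\<lambda>z. k * g z) = ennreal ((cmod k)\<^sup>2) * fock_norm2 g"
proof -
  have "(\<integral>\<^sup>+ z. ennreal ((cmod (k * g z))\<^sup>2 * exp (- (norm z)\<^sup>2 / 2)) \<partial>lborel)
     = (\<integral>\<^sup>+ z. ennreal ((cmod k)\<^sup>2) * ennreal ((cmod (g z))\<^sup>2 * exp (- (norm z)\<^sup>2 / 2)) \<partial>lborel)"
    by (intro nn_integral_cong) (simp add: norm_mult power_mult_distrib ennreal_mult[symmetric] mult.assoc)
  also have "\<dots> = ennreal ((cmod k)\<^sup>2) * (\<integral>\<^sup>+ z. ennreal ((cmod (g z))\<^sup>2 * exp (- (norm z)\<^sup>2 / 2)) \<partial>lborel)"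
    by (rule nn_integral_cmult[OF meas_cont[OF assms]])
  finally show ?thesis unfolding fock_norm2_def by (simp add: ac_simps)
qed

lemma fock_pos:
  fixes g :: "complex^'d \<Rightarrow> complex"
  assumes "continuous_on UNIV g" and "\<And>z. g z \<noteq> 0"
  shows "fock_norm2 g \<noteq> 0"
proof
  assume "fock_norm2 g = 0"
  moreover have "ennreal ((2 * pi) powi (- int CARD('d))) \<noteq> 0" by simp
  ultimately have "(\<integral>\<^sup>+ z. ennreal ((cmod (g z))\<^sup>2 * exp (- (norm z)\<^sup>2 / 2)) \<partial>lborel) = 0"
    unfolding fock_norm2_def by simp
  then have "AE z in lborel. ennreal ((cmod (g z))\<^sup>2 * exp (- (norm z)\<^sup>2 / 2)) = 0"
    using nn_integral_0_iff_AE[OF meas_cont[OF assms(1)]] by simp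
  moreover have "ennreal ((cmod (g z))\<^sup>2 * exp (- (norm z)\<^sup>2 / 2)) \<noteq> 0" for z
    using assms(2)[of z] by simp
  ultimately have "AE z in (lborel :: (complex^'d) measure). False" by simp
  then have "ae_filter (lborel :: (complex^'d) measure) = bot" using trivial_limit_def by blast
  then show False by (simp add: ae_filter_eq_bot_iff)
qed

lemma fock_fin:
  fixes c :: "complex^'d"
  shows "fock_norm2 (\<lambda>z. exp (s * LL c z)) < \<infinity>"
proof -
  let ?W = "\<Sum>j\<in>UNIV. (cmod (s * c$j))\<^sup>2"
  have "(\<integral>\<^sup>+ z. ennreal ((cmod (exp (s * LL c z)))\<^sup>2 * exp (- (norm z)\<^sup>2 / 2)) \<partial>lborel)
     \<le> (\<integral>\<^sup>+ z. ennreal (exp (4 * ?W)) * ennreal (exp (- (norm (z::complex^'d))\<^sup>2 / 4)) \<partial>lborel)"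
  proof (rule nn_integral_mono)
    fix z :: "complex^'d"
    have "ennreal ((cmod (exp (s * LL c z)))\<^sup>2 * exp (- (norm z)\<^sup>2 / 2))
       \<le> ennreal (exp (4 * ?W) * exp (- (norm z)\<^sup>2 / 4))"
      by (rule ennreal_leI) (rule pt_bound)
    also have "\<dots> = ennreal (exp (4 * ?W)) * ennreal (exp (- (norm z)\<^sup>2 / 4))"
      by (rule ennreal_mult) auto
    finally show "ennreal ((cmod (exp (s * LL c z)))\<^sup>2 * exp (- (norm z)\<^sup>2 / 2))
       \<le> ennreal (exp (4 * ?W)) * ennreal (exp (- (norm z)\<^sup>2 / 4))" .
  qed
  also have "\<dots> = ennreal (exp (4 * ?W)) * (\<integral>\<^sup>+ z. ennreal (exp (- (norm (z::complex^'d))\<^sup>2 / 4)) \<partial>lborel)"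
  proof (rule nn_integral_cmult)
    have "continuous_on UNIV (\<lambda>z::complex^'d. exp (- (norm z)\<^sup>2 / 4))"
      by (intro continuous_intros; simp)
    then have "(\<lambda>z::complex^'d. exp (- (norm z)\<^sup>2 / 4)) \<in> borel_measurable borel"
      by (rule borel_measurable_continuous_onI)
    then show "(\<lambda>z::complex^'d. ennreal (exp (- (norm z)\<^sup>2 / 4))) \<in> borel_measurable lborel"
      unfolding measurable_lborel1 by measurable
  qed
  also have "\<dots> < \<infinity>" using gaussN[where 'a="complex^'d"] by (simp add: ennreal_mult_less_top)
  finally show ?thesis unfolding fock_norm2_def by (simp add: ennreal_mult_less_top)
qed

lemma LL_add: "LL c (x + y) = LL c x + LL c y"
  by (simp add: LL_def sum.distrib distrib_right)
lemma LL_diff: "LL c (x - y) = LL c x - LL c y"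
  by (simp add: LL_def sum_subtractf left_diff_distrib)

theorem mainTheorem3:
  fixes A :: "complex ^ 'd ^ 'd" and b :: "complex ^ 'd"
  assumes "bounded_comp_op (\<lambda>z. A *v z + b)"
  shows "b \<in> range (\<lambda>x. x - A *v x) \<and> (\<exists>z. A *v z + b = z)"
proof -
  have inr: "b \<in> range (\<lambda>x. x - A *v x)"
  proof (rule ccontr)
    assume "b \<notin> range (\<lambda>x. x - A *v x)"
    then obtain c where c0: "\<And>x. LL c (x - A *v x) = 0" and cb: "LL c b \<noteq> 0"
      using lin by blast
    obtain C :: real where C: "C \<ge> 0"
      "\<And>f. f \<in> fock_space \<Longrightarrow> fock_norm2 (f \<circ> (\<lambda>z. A *v z + b)) \<le> ennreal C * fock_norm2 f"
      using assms unfolding bounded_comp_op_def by blast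
    define s where "s = complex_of_real (C + 1) / LL c b"
    define f where "f = (\<lambda>z::complex^'d. exp (s * LL c z))"
    define k where "k = exp (s * LL c b)"
    have fin: "fock_norm2 f < \<infinity>" unfolding f_def by (rule fock_fin)
    have ent: "entire_fun f" unfolding entire_fun_def f_def using exp_deriv by blast
    have fF: "f \<in> fock_space" using fin ent by (simp add: fock_space_def)
    have cf: "continuous_on UNIV f" unfolding f_def by (rule cont)
    have comp: "f \<circ> (\<lambda>z. A *v z + b) = (\<lambda>z. k * f z)"
    proof
      fix z
      have "LL c (A *v z) = LL c z" using c0[of z] by (simp add: LL_diff)
      then show "(f \<circ> (\<lambda>z. A *v z + b)) z = k * f z"
        by (simp add: f_def k_def LL_add distrib_left exp_add mult.commute)
    qed
    have kk: "(cmod k)\<^sup>2 = exp (2 * (C + 1))"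
    proof -
      have "s * LL c b = complex_of_real (C + 1)" using cb by (simp add: s_def)
      then show ?thesis
        by (simp add: k_def norm_exp_eq_Re power2_eq_square exp_add[symmetric])
    qed
    obtain N where N: "fock_norm2 f = ennreal N" "N \<ge> 0"
      using fin by (cases "fock_norm2 f") auto
    have Npos: "N > 0" using fock_pos[OF cf] N by (auto simp: f_def)
    have "ennreal ((cmod k)\<^sup>2) * ennreal N \<le> ennreal C * ennreal N"
      using C(2)[OF fF] unfolding comp fock_scale[OF cf] N by simp
    then have "ennreal ((cmod k)\<^sup>2 * N) \<le> ennreal (C * N)"
      using N C by (simp add: ennreal_mult[symmetric])
    then have "(cmod k)\<^sup>2 * N \<le> C * N"
      using N C by (subst (asm) ennreal_le_iff) auto
    then have "(cmod k)\<^sup>2 \<le> C" using Npos by simp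
    moreover have "C < exp (2 * (C + 1))"
      using exp_ge_add_one_self[of "2 * (C + 1)"] C by (smt (verit))
    ultimately show False using kk by linarith
  qed
  then obtain x where "b = x - A *v x" by blast
  then have "A *v x + b = x" by simp
  with inr show ?thesis by blast
qed

end
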